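(* Let $K$ be a field of characteristic different from $2$ and $3$, let $L$ be a perfect Lie algebra, $A$ an associative commutative algebra with unit, with at least one of $L$, $A$ finite-dimensional, $D$ a Lie subalgebra of $\operatorname{Der}(A)$, $\langle\cdot,\cdot\rangle$ a nonzero symmetric bilinear invariant form on $L$, and $\xi$ a nonzero element of $HC^1(A)$. Consider the Lie algebra $(L\otimes A)\oplus Kz\oplus D$ with brackets $[x\otimes a,y\otimes b]=[x,y]\otimes ab+\langle x,y\rangle\xi(a,b)z$, $[d,x\otimes a]=x\otimes d(a)$, the bracket of $D$, and $z$ central ($x,y\in L$, $a,b\in A$, $d\in D$), assuming these brackets define a Lie algebra. Then $Z^2_{comm}((L\otimes A)\oplus Kz\oplus D)\cong Z^2_{comm}((L\otimes A)\oplus D)$, where $(L\otimes A)\oplus D$ carries the brackets $[x\otimes a,y\otimes b]=[x,y]\otimes ab$, $[d,x\otimes a]=x\otimes d(a)$ and the bracket of $D$.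
   Context: $Z^2_{comm}(\mathfrak L)$ is the space of symmetric bilinear forms $\varphi$ on a Lie algebra $\mathfrak L$ with $\varphi([x,y],z)+\varphi([z,x],y)+\varphi([y,z],x)=0$ for all $x,y,z$. $HC^1(A)$ is the space of skew-symmetric bilinear forms $\alpha$ on $A$ with $\alpha(ab,c)+\alpha(ca,b)+\alpha(bc,a)=0$ for all $a,b,c\in A$. A bilinear form $\langle\cdot,\cdot\rangle$ on $L$ is invariant if $\langle[x,y],w\rangle=\langle x,[y,w]\rangle$ for all $x,y,w\in L$. *)

theory Defs
  imports Complex_Main
begin

text \<open>All vector spaces are over a field of type 'k; a K-vector space is a type
  together with a scalar multiplication s satisfying the axioms of the locale
  vector_space.\<close>

definition bilin_map ::
  "('k::field \<Rightarrow> 'u::ab_group_add \<Rightarrow> 'u) \<Rightarrow> ('k \<Rightarrow> 'v::ab_group_add \<Rightarrow> 'v) \<Rightarrow>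
   ('k \<Rightarrow> 'w::ab_group_add \<Rightarrow> 'w) \<Rightarrow> ('u \<Rightarrow> 'v \<Rightarrow> 'w) \<Rightarrow> bool" where
  "bilin_map s1 s2 s3 b \<longleftrightarrow>
     (\<forall>y. module_hom s1 s3 (\<lambda>x. b x y)) \<and> (\<forall>x. module_hom s2 s3 (b x))"

definition bilin_form :: "('k::field \<Rightarrow> 'v::ab_group_add \<Rightarrow> 'v) \<Rightarrow> ('v \<Rightarrow> 'v \<Rightarrow> 'k) \<Rightarrow> bool" where
  "bilin_form s \<phi> \<longleftrightarrow> bilin_map s s (*) \<phi>"

definition lie_algebra :: "('k::field \<Rightarrow> 'l::ab_group_add \<Rightarrow> 'l) \<Rightarrow> ('l \<Rightarrow> 'l \<Rightarrow> 'l) \<Rightarrow> bool" where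
  "lie_algebra s br \<longleftrightarrow> vector_space s \<and> bilin_map s s s br \<and> (\<forall>x. br x x = 0) \<and>
     (\<forall>x y z. br x (br y z) + br y (br z x) + br z (br x y) = 0)"

definition perfect_lie :: "('k::field \<Rightarrow> 'l::ab_group_add \<Rightarrow> 'l) \<Rightarrow> ('l \<Rightarrow> 'l \<Rightarrow> 'l) \<Rightarrow> bool" where
  "perfect_lie s br \<longleftrightarrow> module.span s {br x y | x y. True} = UNIV"

definition fin_dim :: "('k::field \<Rightarrow> 'v::ab_group_add \<Rightarrow> 'v) \<Rightarrow> bool" where
  "fin_dim s \<longleftrightarrow> (\<exists>S. finite S \<and> module.span s S = UNIV)"

definition Z2comm :: "('k::field \<Rightarrow> 'v::ab_group_add \<Rightarrow> 'v) \<Rightarrow> ('v \<Rightarrow> 'v \<Rightarrow> 'v) \<Rightarrow> ('v \<Rightarrow> 'v \<Rightarrow> 'k) set" where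
  "Z2comm s br = {\<phi>. bilin_form s \<phi> \<and> (\<forall>x y. \<phi> x y = \<phi> y x) \<and>
      (\<forall>x y z. \<phi> (br x y) z + \<phi> (br z x) y + \<phi> (br y z) x = 0)}"

definition HC1 :: "('k::field \<Rightarrow> 'a::comm_ring_1 \<Rightarrow> 'a) \<Rightarrow> ('a \<Rightarrow> 'a \<Rightarrow> 'k) set" where
  "HC1 s = {\<alpha>. bilin_form s \<alpha> \<and> (\<forall>a b. \<alpha> a b = - \<alpha> b a) \<and>
      (\<forall>a b c. \<alpha> (a * b) c + \<alpha> (c * a) b + \<alpha> (b * c) a = 0)}"

definition comm_algebra :: "('k::field \<Rightarrow> 'a::comm_ring_1 \<Rightarrow> 'a) \<Rightarrow> bool" where
  "comm_algebra s \<longleftrightarrow> vector_space s \<and> (\<forall>c a b. s c (a * b) = s c a * b)"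

definition Der :: "('k::field \<Rightarrow> 'a::comm_ring_1 \<Rightarrow> 'a) \<Rightarrow> ('a \<Rightarrow> 'a) set" where
  "Der s = {d. module_hom s s d \<and> (\<forall>a b. d (a * b) = a * d b + d a * b)}"

definition der_subalgebra :: "('k::field \<Rightarrow> 'a::comm_ring_1 \<Rightarrow> 'a) \<Rightarrow> ('a \<Rightarrow> 'a) set \<Rightarrow> bool" where
  "der_subalgebra s D \<longleftrightarrow> D \<subseteq> Der s \<and> (\<lambda>_. 0) \<in> D \<and>
     (\<forall>d\<in>D. \<forall>e\<in>D. (\<lambda>a. d a + e a) \<in> D) \<and> (\<forall>c. \<forall>d\<in>D. (\<lambda>a. s c (d a)) \<in> D) \<and>
     (\<forall>d\<in>D. \<forall>e\<in>D. (\<lambda>a. d (e a) - e (d a)) \<in> D)"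

definition invariant_form :: "('l \<Rightarrow> 'l \<Rightarrow> 'l) \<Rightarrow> ('l \<Rightarrow> 'l \<Rightarrow> 'k) \<Rightarrow> bool" where
  "invariant_form br ip \<longleftrightarrow> (\<forall>x y w. ip (br x y) w = ip x (br y w))"

text \<open>t : L x A -> V is a bilinear map identifying L \<otimes> A with the subspace
  span (range t) of V: it is bilinear and injective on L \<otimes> A, the latter expressed as:
  every bilinear form on L x A factors through a linear functional on V.
  (Over a field this characterizes span(range t) as L \<otimes> A with x \<otimes> a = t x a.)\<close>
definition tensor_embedding ::
  "('k::field \<Rightarrow> 'l::ab_group_add \<Rightarrow> 'l) \<Rightarrow> ('k \<Rightarrow> 'a::ab_group_add \<Rightarrow> 'a) \<Rightarrow>
   ('k \<Rightarrow> 'v::ab_group_add \<Rightarrow> 'v) \<Rightarrow> ('l \<Rightarrow> 'a \<Rightarrow> 'v) \<Rightarrow> bool" where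
  "tensor_embedding sL sA sV t \<longleftrightarrow> bilin_map sL sA sV t \<and>
     (\<forall>\<beta>. bilin_map sL sA (*) \<beta> \<longrightarrow>
        (\<exists>f. module_hom sV (*) f \<and> (\<forall>x a. f (t x a) = \<beta> x a)))"

definition lin_on_D ::
  "('k::field \<Rightarrow> 'a::ab_group_add \<Rightarrow> 'a) \<Rightarrow> ('k \<Rightarrow> 'v::ab_group_add \<Rightarrow> 'v) \<Rightarrow> ('a \<Rightarrow> 'a) set \<Rightarrow>
   (('a \<Rightarrow> 'a) \<Rightarrow> 'v) \<Rightarrow> bool" where
  "lin_on_D sA sV D \<iota> \<longleftrightarrow> (\<forall>d\<in>D. \<forall>e\<in>D. \<iota> (\<lambda>a. d a + e a) = \<iota> d + \<iota> e) \<and>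
     (\<forall>c. \<forall>d\<in>D. \<iota> (\<lambda>a. sA c (d a)) = sV c (\<iota> d))"

definition forms_iso :: "('u \<Rightarrow> 'u \<Rightarrow> 'k::field) set \<Rightarrow> ('v \<Rightarrow> 'v \<Rightarrow> 'k) set \<Rightarrow> bool" where
  "forms_iso V W \<longleftrightarrow> (\<exists>F. bij_betw F V W \<and>
     (\<forall>\<phi>\<in>V. \<forall>\<psi>\<in>V. F (\<lambda>u v. \<phi> u v + \<psi> u v) = (\<lambda>u v. F \<phi> u v + F \<psi> u v)) \<and>
     (\<forall>c. \<forall>\<phi>\<in>V. F (\<lambda>u v. c * \<phi> u v) = (\<lambda>u v. c * F \<phi> u v)))"

end

theory Submission
  imports Defs
begin

lemma bm:
  assumes "bilin_map s1 s2 s3 b"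
  shows bm_add1: "b (x + x') y = b x y + b x' y"
   and bm_add2: "b x (y + y') = b x y + b x y'"
   and bm_scale1: "b (s1 c x) y = s3 c (b x y)"
   and bm_scale2: "b x (s2 c y) = s3 c (b x y)"
   and bm_zero1: "b 0 y = 0" and bm_zero2: "b x 0 = 0"
   and bm_neg1: "b (- x) y = - b x y" and bm_neg2: "b x (- y) = - b x y"
   and bm_diff1: "b (x - x') y = b x y - b x' y"
   and bm_diff2: "b x (y - y') = b x y - b x y'"
proof -
  have h1: "module_hom s1 s3 (\<lambda>x. b x y)" for y using assms unfolding bilin_map_def by blast
  have h2: "module_hom s2 s3 (b x)" for x using assms unfolding bilin_map_def by blast
  show "b (x + x') y = b x y + b x' y" using module_hom.add[OF h1[of y]] by simp
  show "b x (y + y') = b x y + b x y'" using module_hom.add[OF h2[of x]] by simp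
  show "b (s1 c x) y = s3 c (b x y)" using module_hom.scale[OF h1[of y]] by simp
  show "b x (s2 c y) = s3 c (b x y)" using module_hom.scale[OF h2[of x]] by simp
  show "b 0 y = 0" using module_hom.zero[OF h1[of y]] by simp
  show "b x 0 = 0" using module_hom.zero[OF h2[of x]] by simp
  show "b (- x) y = - b x y" using module_hom.neg[OF h1[of y]] by simp
  show "b x (- y) = - b x y" using module_hom.neg[OF h2[of x]] by simp
  show "b (x - x') y = b x y - b x' y" using module_hom.diff[OF h1[of y]] by simp
  show "b x (y - y') = b x y - b x y'" using module_hom.diff[OF h2[of x]] by simp
qed

lemma lie_anti:
  assumes "lie_algebra s br" shows "br y x = - br x y"
proof -
  have b: "bilin_map s s s br" and z: "\<And>x. br x x = 0" using assms unfolding lie_algebra_def by auto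
  have "0 = br (x + y) (x + y)" using z by simp
  also have "\<dots> = br x x + br x y + (br y x + br y y)"
    by (simp add: bm_add1[OF b] bm_add2[OF b])
  finally have "br x y + br y x = 0" using z by (simp add: algebra_simps)
  then show ?thesis by (simp add: eq_neg_iff_add_eq_0 add.commute)
qed

lemma lie_jacobi:
  assumes "lie_algebra s br" shows "br x (br y z) + br y (br z x) + br z (br x y) = 0"
  using assms unfolding lie_algebra_def by blast

lemma lie_vs: "lie_algebra s br \<Longrightarrow> vector_space s"
  unfolding lie_algebra_def by blast

lemma lie_bil: "lie_algebra s br \<Longrightarrow> bilin_map s s s br"
  unfolding lie_algebra_def by blast

lemma module_field: "module ((*) :: 'k::field \<Rightarrow> 'k \<Rightarrow> 'k)"
  by unfold_locales (auto simp: algebra_simps)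

lemma span_vanish:
  fixes s :: "'k::field \<Rightarrow> 'v::ab_group_add \<Rightarrow> 'v" and f :: "'v \<Rightarrow> 'k"
  assumes vs: "vector_space s" and x: "x \<in> module.span s S"
    and base: "\<And>y. y \<in> S \<Longrightarrow> f y = 0"
    and add: "\<And>a b. f (a + b) = f a + f b" and sc: "\<And>c a. f (s c a) = c * f a"
  shows "f x = 0"
proof -
  interpret vector_space s by (rule vs)
  have f0: "f 0 = 0" using sc[of 0 0] by simp
  have "subspace {x. f x = 0}" unfolding subspace_def using f0 add sc by simp
  then have "x \<in> {x. f x = 0}" using span_induct[OF x] base by blast
  then show ?thesis by simp
qed

lemma span_vanish_UNIV:
  fixes s :: "'k::field \<Rightarrow> 'v::ab_group_add \<Rightarrow> 'v" and f :: "'v \<Rightarrow> 'k"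
  assumes vs: "vector_space s" and x: "module.span s S = UNIV"
    and base: "\<And>y. y \<in> S \<Longrightarrow> f y = 0"
    and add: "\<And>a b. f (a + b) = f a + f b" and sc: "\<And>c a. f (s c a) = c * f a"
  shows "f x = 0"
  using span_vanish[OF vs _ base add sc] x by blast

lemma separation:
  fixes s :: "'k::field \<Rightarrow> 'v::ab_group_add \<Rightarrow> 'v"
  assumes vs: "vector_space s" and v: "v \<noteq> 0"
  shows "\<exists>f. module_hom s (*) f \<and> f v = 1"
proof -
  interpret vector_space s by (rule vs)
  define B where "B = extend_basis {v}"
  have iv: "independent {v}" using v by simp
  have iB: "independent B" unfolding B_def by (rule independent_extend_basis[OF iv])
  have sB: "span B = UNIV" unfolding B_def by (rule span_extend_basis[OF iv])
  have vB: "v \<in> B" unfolding B_def using extend_basis_superset[OF iv] by blast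
  define f where "f x = representation B x v" for x
  have "module_hom s (*) f"
    unfolding module_hom_def module_hom_axioms_def
  proof (intro conjI allI)
    show "module s" using vs by (simp add: module_iff_vector_space)
    show "module ((*) :: 'k \<Rightarrow> 'k \<Rightarrow> 'k)" by (rule module_field)
    show "f (b1 + b2) = f b1 + f b2" for b1 b2
      unfolding f_def using representation_add[OF iB] sB by simp
    show "f (s r b) = r * f b" for r b
      unfolding f_def using representation_scale[OF iB] sB by simp
  qed
  moreover have "f v = 1" unfolding f_def using representation_basis[OF iB vB] by simp
  ultimately show ?thesis by blast
qed



definition fac :: "('k::field \<Rightarrow> 'v::ab_group_add \<Rightarrow> 'v) \<Rightarrow> ('l \<Rightarrow> 'a \<Rightarrow> 'v) \<Rightarrow> ('l \<Rightarrow> 'a \<Rightarrow> 'k) \<Rightarrow> 'v \<Rightarrow> 'k" where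
  "fac sV tV \<beta> = (SOME f. module_hom sV (*) f \<and> (\<forall>x a. f (tV x a) = \<beta> x a))"

lemma fac_props:
  assumes "tensor_embedding sL sA sV tV" "bilin_map sL sA (*) \<beta>"
  shows "module_hom sV (*) (fac sV tV \<beta>)" "fac sV tV \<beta> (tV x a) = \<beta> x a"
proof -
  have "\<exists>f. module_hom sV (*) f \<and> (\<forall>x a. f (tV x a) = \<beta> x a)"
    using assms unfolding tensor_embedding_def by blast
  from someI_ex[OF this] show "module_hom sV (*) (fac sV tV \<beta>)" "fac sV tV \<beta> (tV x a) = \<beta> x a"
    unfolding fac_def by auto
qed

definition transfer where
  "transfer sL sA sV tV sW tW v = (THE w. w \<in> module.span sW (range (case_prod tW)) \<and>
     (\<forall>\<beta>. bilin_map sL sA (*) \<beta> \<longrightarrow> fac sV tV \<beta> v = fac sW tW \<beta> w))"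

locale tpair =
  fixes sL :: "'k::field \<Rightarrow> 'l::ab_group_add \<Rightarrow> 'l" and sA :: "'k \<Rightarrow> 'a::ab_group_add \<Rightarrow> 'a"
    and sV :: "'k \<Rightarrow> 'v::ab_group_add \<Rightarrow> 'v" and tV :: "'l \<Rightarrow> 'a \<Rightarrow> 'v"
    and sW :: "'k \<Rightarrow> 'w::ab_group_add \<Rightarrow> 'w" and tW :: "'l \<Rightarrow> 'a \<Rightarrow> 'w"
  assumes vsV: "vector_space sV" and vsW: "vector_space sW"
    and teV: "tensor_embedding sL sA sV tV" and teW: "tensor_embedding sL sA sW tW"
begin

abbreviation "SV \<equiv> module.span sV (range (case_prod tV))"
abbreviation "SW \<equiv> module.span sW (range (case_prod tW))"
abbreviation "T \<equiv> transfer sL sA sV tV sW tW"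

lemma bilV: "bilin_map sL sA sV tV" using teV unfolding tensor_embedding_def by blast
lemma bilW: "bilin_map sL sA sW tW" using teW unfolding tensor_embedding_def by blast

lemma transfer_exists:
  assumes v: "v \<in> SV"
  shows "\<exists>w\<in>SW. \<forall>\<beta>. bilin_map sL sA (*) \<beta> \<longrightarrow> fac sV tV \<beta> v = fac sW tW \<beta> w"
proof -
  interpret V: vector_space sV by (rule vsV)
  interpret W: vector_space sW by (rule vsW)
  define P where "P = {v. \<exists>w\<in>SW. \<forall>\<beta>. bilin_map sL sA (*) \<beta> \<longrightarrow> fac sV tV \<beta> v = fac sW tW \<beta> w}"
  have sub: "V.subspace P"
    unfolding V.subspace_def
  proof (intro conjI ballI allI)
    show "0 \<in> P" unfolding P_def
      by (rule CollectI, rule bexI[of _ 0])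
        (auto simp: module_hom.zero[OF fac_props(1)[OF teV]] module_hom.zero[OF fac_props(1)[OF teW]] W.span_zero)
    show "x + y \<in> P" if xP: "x \<in> P" and yP: "y \<in> P" for x y
    proof -
      obtain w1 where w1: "w1 \<in> SW" "\<forall>\<beta>. bilin_map sL sA (*) \<beta> \<longrightarrow> fac sV tV \<beta> x = fac sW tW \<beta> w1"
        using xP unfolding P_def by blast
      obtain w2 where w2: "w2 \<in> SW" "\<forall>\<beta>. bilin_map sL sA (*) \<beta> \<longrightarrow> fac sV tV \<beta> y = fac sW tW \<beta> w2"
        using yP unfolding P_def by blast
      show ?thesis unfolding P_def
        using w1 w2 W.span_add[OF w1(1) w2(1)]
        by (auto simp: module_hom.add[OF fac_props(1)[OF teV]] module_hom.add[OF fac_props(1)[OF teW]]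
          intro!: bexI[of _ "w1 + w2"])
    qed
    show "sV c x \<in> P" if xP: "x \<in> P" for c x
    proof -
      obtain w1 where w1: "w1 \<in> SW" "\<forall>\<beta>. bilin_map sL sA (*) \<beta> \<longrightarrow> fac sV tV \<beta> x = fac sW tW \<beta> w1"
        using xP unfolding P_def by blast
      show ?thesis unfolding P_def
        using w1 W.span_scale[OF w1(1)]
        by (auto simp: module_hom.scale[OF fac_props(1)[OF teV]] module_hom.scale[OF fac_props(1)[OF teW]]
          intro!: bexI[of _ "sW c w1"])
    qed
  qed
  have base: "x \<in> P" if xr: "x \<in> range (case_prod tV)" for x
  proof -
    obtain l a where x: "x = tV l a" using xr by auto
    show ?thesis unfolding P_def x
      by (auto simp: fac_props(2)[OF teV] fac_props(2)[OF teW] intro!: bexI[of _ "tW l a"] W.span_base)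
  qed
  have "v \<in> P"
    by (rule V.span_induct[OF v, where P="\<lambda>x. x \<in> P"]) (use sub base in auto)
  then show ?thesis unfolding P_def by blast
qed

lemma fac_unique:
  assumes w: "w \<in> SW" and w': "w' \<in> SW"
    and eq: "\<forall>\<beta>. bilin_map sL sA (*) \<beta> \<longrightarrow> fac sW tW \<beta> w = fac sW tW \<beta> w'"
  shows "w = w'"
proof (rule ccontr)
  assume ne: "w \<noteq> w'"
  interpret W: vector_space sW by (rule vsW)
  have "w - w' \<noteq> 0" using ne by simp
  then obtain g where g: "module_hom sW (*) g" "g (w - w') = 1" using separation[OF vsW] by blast
  define \<beta> where "\<beta> x a = g (tW x a)" for x a
  have mL: "module sL" and mA: "module sA" and mW: "module sW"
    using bilW unfolding bilin_map_def module_hom_def by blast+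
  have bil: "bilin_map sL sA (*) \<beta>"
    unfolding bilin_map_def module_hom_def module_hom_axioms_def
    by (simp add: mL mA module_field \<beta>_def bm_add1[OF bilW] bm_add2[OF bilW] bm_scale1[OF bilW]
        bm_scale2[OF bilW] module_hom.add[OF g(1)] module_hom.scale[OF g(1)])
  have agree: "fac sW tW \<beta> v = g v" if v: "v \<in> SW" for v
  proof -
    have "fac sW tW \<beta> v - g v = 0"
    proof (rule span_vanish[OF vsW v, where f="\<lambda>v. fac sW tW \<beta> v - g v"])
      show "fac sW tW \<beta> y - g y = 0" if "y \<in> range (case_prod tW)" for y
        using that fac_props(2)[OF teW bil] by (auto simp: \<beta>_def)
      show "fac sW tW \<beta> (a + b) - g (a + b) = fac sW tW \<beta> a - g a + (fac sW tW \<beta> b - g b)" for a b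
        by (simp add: module_hom.add[OF fac_props(1)[OF teW bil]] module_hom.add[OF g(1)])
      show "fac sW tW \<beta> (sW c a) - g (sW c a) = c * (fac sW tW \<beta> a - g a)" for c a
        by (simp add: module_hom.scale[OF fac_props(1)[OF teW bil]] module_hom.scale[OF g(1)] algebra_simps)
    qed
    then show ?thesis by simp
  qed
  have "g w = g w'" using agree[OF w] agree[OF w'] eq bil by metis
  then have "g (w - w') = 0" by (simp add: module_hom.diff[OF g(1)])
  then show False using g(2) by simp
qed

lemma transfer_spec:
  assumes v: "v \<in> SV"
  shows "T v \<in> SW \<and> (\<forall>\<beta>. bilin_map sL sA (*) \<beta> \<longrightarrow> fac sV tV \<beta> v = fac sW tW \<beta> (T v))"
proof -
  have ex: "\<exists>!w. w \<in> SW \<and> (\<forall>\<beta>. bilin_map sL sA (*) \<beta> \<longrightarrow> fac sV tV \<beta> v = fac sW tW \<beta> w)"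
  proof -
    obtain w where w: "w \<in> SW" "\<forall>\<beta>. bilin_map sL sA (*) \<beta> \<longrightarrow> fac sV tV \<beta> v = fac sW tW \<beta> w"
      using transfer_exists[OF v] by blast
    show ?thesis
    proof (rule ex1I[of _ w])
      show "w \<in> SW \<and> (\<forall>\<beta>. bilin_map sL sA (*) \<beta> \<longrightarrow> fac sV tV \<beta> v = fac sW tW \<beta> w)" using w by blast
      show "w' = w" if "w' \<in> SW \<and> (\<forall>\<beta>. bilin_map sL sA (*) \<beta> \<longrightarrow> fac sV tV \<beta> v = fac sW tW \<beta> w')" for w'
        using fac_unique[of w' w] that w by metis
    qed
  qed
  show ?thesis unfolding transfer_def by (rule theI'[OF ex])
qed

lemma transfer_eq:
  assumes v: "v \<in> SV" and w: "w \<in> SW"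
    and eq: "\<forall>\<beta>. bilin_map sL sA (*) \<beta> \<longrightarrow> fac sV tV \<beta> v = fac sW tW \<beta> w"
  shows "T v = w"
  using fac_unique[of "T v" w] transfer_spec[OF v] w eq by metis

lemma transfer_in: "v \<in> SV \<Longrightarrow> T v \<in> SW"
  using transfer_spec by blast

lemma transfer_add:
  assumes "v1 \<in> SV" "v2 \<in> SV" shows "T (v1 + v2) = T v1 + T v2"
proof -
  interpret V: vector_space sV by (rule vsV)
  interpret W: vector_space sW by (rule vsW)
  show ?thesis
    using transfer_spec[OF assms(1)] transfer_spec[OF assms(2)]
    by (intro transfer_eq V.span_add W.span_add assms)
      (auto simp: module_hom.add[OF fac_props(1)[OF teV]] module_hom.add[OF fac_props(1)[OF teW]])
qed

lemma transfer_scale: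
  assumes "v \<in> SV" shows "T (sV c v) = sW c (T v)"
proof -
  interpret V: vector_space sV by (rule vsV)
  interpret W: vector_space sW by (rule vsW)
  show ?thesis
    using transfer_spec[OF assms(1)]
    by (intro transfer_eq V.span_scale W.span_scale assms)
      (auto simp: module_hom.scale[OF fac_props(1)[OF teV]] module_hom.scale[OF fac_props(1)[OF teW]])
qed

lemma transfer_base: "T (tV x a) = tW x a"
proof -
  interpret V: vector_space sV by (rule vsV)
  interpret W: vector_space sW by (rule vsW)
  show ?thesis
    by (intro transfer_eq V.span_base W.span_base) (auto simp: fac_props(2)[OF teV] fac_props(2)[OF teW])
qed

lemma transfer_inv:
  assumes v: "v \<in> SV" shows "transfer sL sA sW tW sV tV (T v) = v"
proof -
  interpret sw: tpair sL sA sW tW sV tV by (rule tpair.intro[OF vsW vsV teW teV])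
  show ?thesis using transfer_spec[OF v] v by (intro sw.transfer_eq) auto
qed

end



locale setup54 =
  fixes sL :: "'k::field \<Rightarrow> 'l::ab_group_add \<Rightarrow> 'l" and brL :: "'l \<Rightarrow> 'l \<Rightarrow> 'l"
    and sA :: "'k \<Rightarrow> 'a::comm_ring_1 \<Rightarrow> 'a"
    and D :: "('a \<Rightarrow> 'a) set"
    and ip :: "'l \<Rightarrow> 'l \<Rightarrow> 'k" and \<xi> :: "'a \<Rightarrow> 'a \<Rightarrow> 'k"
    and sG :: "'k \<Rightarrow> 'g::ab_group_add \<Rightarrow> 'g" and brG :: "'g \<Rightarrow> 'g \<Rightarrow> 'g"
    and tG :: "'l \<Rightarrow> 'a \<Rightarrow> 'g" and z :: 'g and \<iota>G :: "('a \<Rightarrow> 'a) \<Rightarrow> 'g"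
    and sH :: "'k \<Rightarrow> 'h::ab_group_add \<Rightarrow> 'h" and brH :: "'h \<Rightarrow> 'h \<Rightarrow> 'h"
    and tH :: "'l \<Rightarrow> 'a \<Rightarrow> 'h" and \<iota>H :: "('a \<Rightarrow> 'a) \<Rightarrow> 'h"
  assumes char2: "(2::'k) \<noteq> 0" and char3: "(3::'k) \<noteq> 0"
    and L: "lie_algebra sL brL" and perf: "perfect_lie sL brL"
    and A: "comm_algebra sA"
    and fin: "fin_dim sL \<or> fin_dim sA"
    and D: "der_subalgebra sA D"
    and ip: "bilin_form sL ip" "\<forall>x y. ip x y = ip y x" "invariant_form brL ip" "ip \<noteq> (\<lambda>x y. 0)"
    and xi: "\<xi> \<in> HC1 sA" "\<xi> \<noteq> (\<lambda>a b. 0)"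
    \<comment> \<open>G = (L \<otimes> A) \<oplus> K z \<oplus> D with the given brackets, assumed to be a Lie algebra\<close>
    and G: "lie_algebra sG brG"
    and G_tensor: "tensor_embedding sL sA sG tG"
    and G_D: "lin_on_D sA sG D \<iota>G"
    and G_sum_ex: "\<forall>g. \<exists>t c d. t \<in> module.span sG (range (case_prod tG)) \<and> d \<in> D \<and>
                        g = t + sG c z + \<iota>G d"
    and G_sum_uniq: "\<forall>t c d t' c' d'. t \<in> module.span sG (range (case_prod tG)) \<and> d \<in> D \<and>
                        t' \<in> module.span sG (range (case_prod tG)) \<and> d' \<in> D \<and>
                        t + sG c z + \<iota>G d = t' + sG c' z + \<iota>G d' \<longrightarrow> t = t' \<and> c = c' \<and> d = d'"
    and G_br1: "\<forall>x y a b. brG (tG x a) (tG y b) = tG (brL x y) (a * b) + sG (ip x y * \<xi> a b) z"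
    and G_br2: "\<forall>d\<in>D. \<forall>x a. brG (\<iota>G d) (tG x a) = tG x (d a)"
    and G_br3: "\<forall>d\<in>D. \<forall>e\<in>D. brG (\<iota>G d) (\<iota>G e) = \<iota>G (\<lambda>a. d (e a) - e (d a))"
    and G_br4: "\<forall>g. brG z g = 0"
    \<comment> \<open>H = (L \<otimes> A) \<oplus> D with the given brackets\<close>
    and H: "lie_algebra sH brH"
    and H_tensor: "tensor_embedding sL sA sH tH"
    and H_D: "lin_on_D sA sH D \<iota>H"
    and H_sum_ex: "\<forall>h. \<exists>t d. t \<in> module.span sH (range (case_prod tH)) \<and> d \<in> D \<and> h = t + \<iota>H d"
    and H_sum_uniq: "\<forall>t d t' d'. t \<in> module.span sH (range (case_prod tH)) \<and> d \<in> D \<and>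
                        t' \<in> module.span sH (range (case_prod tH)) \<and> d' \<in> D \<and>
                        t + \<iota>H d = t' + \<iota>H d' \<longrightarrow> t = t' \<and> d = d'"
    and H_br1: "\<forall>x y a b. brH (tH x a) (tH y b) = tH (brL x y) (a * b)"
    and H_br2: "\<forall>d\<in>D. \<forall>x a. brH (\<iota>H d) (tH x a) = tH x (d a)"
    and H_br3: "\<forall>d\<in>D. \<forall>e\<in>D. brH (\<iota>H d) (\<iota>H e) = \<iota>H (\<lambda>a. d (e a) - e (d a))"
  
begin

lemma vsL: "vector_space sL" using lie_vs[OF L] .
lemma vsG: "vector_space sG" using lie_vs[OF G] .
lemma vsH: "vector_space sH" using lie_vs[OF H] .
lemma vsA: "vector_space sA" using A unfolding comm_algebra_def by blast
lemma bilL: "bilin_map sL sL sL brL" using lie_bil[OF L] .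
lemma bilG: "bilin_map sG sG sG brG" using lie_bil[OF G] .
lemma bilH: "bilin_map sH sH sH brH" using lie_bil[OF H] .
lemma tGbil: "bilin_map sL sA sG tG" using G_tensor unfolding tensor_embedding_def by blast
lemma tHbil: "bilin_map sL sA sH tH" using H_tensor unfolding tensor_embedding_def by blast
lemma ipbil: "bilin_map sL sL (*) ip" using ip(1) unfolding bilin_form_def .
lemma ipsym: "ip x y = ip y x" using ip(2) by blast
lemma ipinv: "ip (brL x y) w = ip x (brL y w)" using ip(3) unfolding invariant_form_def by blast
lemma xibil: "bilin_map sA sA (*) \<xi>" using xi(1) unfolding HC1_def bilin_form_def by blast
lemma xianti: "\<xi> a b = - \<xi> b a" using xi(1) unfolding HC1_def by blast
lemma xicyc: "\<xi> (a * b) c + \<xi> (c * a) b + \<xi> (b * c) a = 0" using xi(1) unfolding HC1_def by blast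
lemma xi1: "\<xi> c 1 = 0"
proof -
  have "\<xi> (c * 1) 1 + \<xi> (1 * c) 1 + \<xi> (1 * 1) c = 0" by (rule xicyc)
  then have "\<xi> c 1 + \<xi> c 1 + \<xi> 1 c = 0" by simp
  then show ?thesis using xianti[of 1 c] by simp
qed
lemma perfL: "module.span sL {brL x y | x y. True} = UNIV" using perf unfolding perfect_lie_def .
lemma antiL: "brL y x = - brL x y" using lie_anti[OF L] .
lemma antiG: "brG y x = - brG x y" using lie_anti[OF G] .
lemma antiH: "brH y x = - brH x y" using lie_anti[OF H] .

lemma D0: "(\<lambda>_. 0) \<in> D" using D unfolding der_subalgebra_def by blast
lemma Dadd: "d \<in> D \<Longrightarrow> e \<in> D \<Longrightarrow> (\<lambda>a. d a + e a) \<in> D" using D unfolding der_subalgebra_def by blast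
lemma Dscale: "d \<in> D \<Longrightarrow> (\<lambda>a. sA c (d a)) \<in> D" using D unfolding der_subalgebra_def by blast
lemma Dbr: "d \<in> D \<Longrightarrow> e \<in> D \<Longrightarrow> (\<lambda>a. d (e a) - e (d a)) \<in> D" using D unfolding der_subalgebra_def by blast
lemma iGadd: "d \<in> D \<Longrightarrow> e \<in> D \<Longrightarrow> \<iota>G (\<lambda>a. d a + e a) = \<iota>G d + \<iota>G e" using G_D unfolding lin_on_D_def by blast
lemma iGscale: "d \<in> D \<Longrightarrow> \<iota>G (\<lambda>a. sA c (d a)) = sG c (\<iota>G d)" using G_D unfolding lin_on_D_def by blast
lemma iHadd: "d \<in> D \<Longrightarrow> e \<in> D \<Longrightarrow> \<iota>H (\<lambda>a. d a + e a) = \<iota>H d + \<iota>H e" using H_D unfolding lin_on_D_def by blast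
lemma iHscale: "d \<in> D \<Longrightarrow> \<iota>H (\<lambda>a. sA c (d a)) = sH c (\<iota>H d)" using H_D unfolding lin_on_D_def by blast
lemma iG0: "\<iota>G (\<lambda>_. 0) = 0" using iGadd[OF D0 D0] by simp
lemma iH0: "\<iota>H (\<lambda>_. 0) = 0" using iHadd[OF D0 D0] by simp

lemma perf_vanish:
  assumes base: "\<And>x y. f (brL x y) = 0"
    and add: "\<And>a b. f (a + b) = f a + f b" and sc: "\<And>c a. f (sL c a) = c * f a"
  shows "f x = 0"
  by (rule span_vanish_UNIV[OF vsL perfL _ add sc]) (use base in auto)

end



context setup54
begin

lemma zkill:
  assumes phi: "\<phi> \<in> Z2comm sG brG"
  shows "\<phi> z g = 0"
proof -
  interpret Gv: vector_space sG by (rule vsG)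
  have pb: "bilin_map sG sG (*) \<phi>" using phi unfolding Z2comm_def bilin_form_def by blast
  have ps: "\<And>x y. \<phi> x y = \<phi> y x" using phi unfolding Z2comm_def by blast
  have pc: "\<And>x y w. \<phi> (brG x y) w + \<phi> (brG w x) y + \<phi> (brG y w) x = 0"
    using phi unfolding Z2comm_def by blast
  have br4': "brG g2 z = 0" for g2 using antiG[of g2 z] G_br4 by simp
  have step1: "\<phi> (brG g1 g2) z = 0" for g1 g2
    using pc[of g1 g2 z] G_br4 br4' by (simp add: bm_zero1[OF pb])
  have tGbr: "tG (brL x y) c = brG (tG x c) (tG y 1)" for x y c
    using G_br1 xi1[of c] by simp
  have zt: "\<phi> z (tG w c) = 0" for w c
  proof (rule perf_vanish[where f="\<lambda>w. \<phi> z (tG w c)"])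
    show "\<phi> z (tG (brL x y) c) = 0" for x y
      using step1 ps tGbr by metis
    show "\<phi> z (tG (a + b) c) = \<phi> z (tG a c) + \<phi> z (tG b c)" for a b
      by (simp add: bm_add1[OF tGbil] bm_add2[OF pb])
    show "\<phi> z (tG (sL k a) c) = k * \<phi> z (tG a c)" for k a
      by (simp add: bm_scale1[OF tGbil] bm_scale2[OF pb])
  qed
  define \<Phi> where "\<Phi> x a y b = \<phi> (tG x a) (tG y b)" for x a y b
  have brtt: "\<phi> (brG (tG x a) (tG y b)) (tG w c) = \<Phi> (brL x y) (a*b) w c" for x a y b w c
    using G_br1 by (simp add: \<Phi>_def bm_add1[OF pb] bm_scale1[OF pb] zt)
  have T: "\<Phi> (brL u v) (a*b) w c + \<Phi> (brL w u) (c*a) v b + \<Phi> (brL v w) (b*c) u a = 0" for u v w a b c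
    using pc[of "tG u a" "tG v b" "tG w c"] by (simp add: brtt)
  have Phisym: "\<Phi> x a y b = \<Phi> y b x a" for x a y b unfolding \<Phi>_def by (rule ps)
  have swap: "\<Phi> x p y q = \<Phi> x q y p" for x y p q
  proof -
    define \<Psi> where "\<Psi> x y = \<Phi> x p y q - \<Phi> x q y p" for x y
    have Panti: "\<Psi> y x = - \<Psi> x y" for x y unfolding \<Psi>_def using Phisym by simp
    have Padd: "\<Psi> (x1 + x2) y = \<Psi> x1 y + \<Psi> x2 y" for x1 x2 y
      unfolding \<Psi>_def \<Phi>_def by (simp add: bm_add1[OF tGbil] bm_add1[OF pb])
    have Pscale: "\<Psi> (sL c x) y = c * \<Psi> x y" for c x y
      unfolding \<Psi>_def \<Phi>_def by (simp add: bm_scale1[OF tGbil] bm_scale1[OF pb] algebra_simps)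
    have Pneg: "\<Psi> (- x) y = - \<Psi> x y" for x y
      unfolding \<Psi>_def \<Phi>_def by (simp add: bm_neg1[OF tGbil] bm_neg1[OF pb])
    have Pneg2: "\<Psi> x (- y) = - \<Psi> x y" for x y
      using Pneg[of y x] Panti[of "-y" x] Panti[of x y] by simp
    have Padd2: "\<Psi> x (y1 + y2) = \<Psi> x y1 + \<Psi> x y2" for x y1 y2
    proof -
      have "\<Psi> x (y1 + y2) = - \<Psi> (y1 + y2) x" using Panti[of "y1+y2" x] by simp
      also have "\<dots> = - (\<Psi> y1 x + \<Psi> y2 x)" using Padd[of y1 y2 x] by simp
      also have "\<dots> = \<Psi> x y1 + \<Psi> x y2" using Panti[of y1 x] Panti[of y2 x] by simp
      finally show ?thesis .
    qed
    have Pscale2: "\<Psi> x (sL c y) = c * \<Psi> x y" for c x y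
      using Pscale[of c y x] Panti[of "sL c y" x] Panti[of y x] by simp
    have Pzero: "\<Psi> 0 y = 0" for y
    proof -
      have "\<Psi> 0 y + \<Psi> 0 y = \<Psi> 0 y + 0" using Padd[of 0 0 y] by simp
      then show ?thesis by (rule add_left_imp_eq)
    qed
    have Pcyc: "\<Psi> (brL u v) w = \<Psi> (brL v w) u" for u v w
    proof -
      have t1: "\<Phi> (brL u v) p w q + \<Phi> (brL w u) (p*q) v 1 + \<Phi> (brL v w) q u p = 0"
        using T[where u=u and v=v and w=w and a=p and b=1 and c=q] by (simp add: mult.commute)
      have t2: "\<Phi> (brL u v) q w p + \<Phi> (brL w u) (p*q) v 1 + \<Phi> (brL v w) p u q = 0"
        using T[where u=u and v=v and w=w and a=q and b=1 and c=p] by (simp add: mult.commute)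
      show ?thesis unfolding \<Psi>_def using t1 t2 by algebra
    qed
    have J: "brL (brL c d) a + brL (brL d a) c + brL (brL a c) d = 0" for a c d
    proof -
      have "brL a (brL c d) + brL c (brL d a) + brL d (brL a c) = 0" by (rule lie_jacobi[OF L])
      moreover have "brL (brL c d) a + brL (brL d a) c + brL (brL a c) d =
          - (brL a (brL c d) + brL c (brL d a) + brL d (brL a c))"
        using antiL[of "brL c d" a] antiL[of "brL d a" c] antiL[of "brL a c" d] by simp
      ultimately show ?thesis by simp
    qed
    have Bian: "\<Psi> (brL a b) (brL c d) + \<Psi> (brL c b) (brL d a) + \<Psi> (brL d b) (brL a c) = 0" for a b c d
    proof -
      have "\<Psi> (brL (brL c d) a + brL (brL d a) c + brL (brL a c) d) b = 0" using J Pzero by simp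
      then have "\<Psi> (brL (brL c d) a) b + \<Psi> (brL (brL d a) c) b + \<Psi> (brL (brL a c) d) b = 0"
        by (simp add: Padd)
      moreover have "\<Psi> (brL (brL c d) a) b = \<Psi> (brL a b) (brL c d)" by (rule Pcyc)
      moreover have "\<Psi> (brL (brL d a) c) b = \<Psi> (brL c b) (brL d a)" by (rule Pcyc)
      moreover have "\<Psi> (brL (brL a c) d) b = \<Psi> (brL d b) (brL a c)" by (rule Pcyc)
      ultimately show ?thesis by simp
    qed
    have S0: "\<Psi> (brL a b) (brL c d) = 0" for a b c d
    proof -
      have E1: "\<Psi> (brL a b) (brL c d) + \<Psi> (brL c b) (brL d a) + \<Psi> (brL d b) (brL a c) = 0" by (rule Bian)
      have E2: "\<Psi> (brL b a) (brL c d) + \<Psi> (brL c a) (brL d b) + \<Psi> (brL d a) (brL b c) = 0" by (rule Bian)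
      have r1: "\<Psi> (brL c b) (brL d a) = - \<Psi> (brL a d) (brL b c)"
        using antiL[of b c] antiL[of a d] Pneg Pneg2 Panti[of "brL a d" "brL b c"] by simp
      have r2: "\<Psi> (brL d b) (brL a c) = \<Psi> (brL a c) (brL b d)"
        using antiL[of b d] Pneg Pneg2 Panti[of "brL a c" "brL b d"] by simp
      have r3: "\<Psi> (brL b a) (brL c d) = - \<Psi> (brL a b) (brL c d)"
        using antiL[of a b] Pneg by simp
      have r4: "\<Psi> (brL c a) (brL d b) = \<Psi> (brL a c) (brL b d)"
        using antiL[of a c] antiL[of b d] Pneg Pneg2 by simp
      have r5: "\<Psi> (brL d a) (brL b c) = - \<Psi> (brL a d) (brL b c)"
        using antiL[of a d] Pneg by simp
      from E1 E2 r1 r2 r3 r4 r5 have "2 * \<Psi> (brL a b) (brL c d) = 0"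
        by (simp add: algebra_simps)
      then show ?thesis using char2 by simp
    qed
    have S1: "\<Psi> x (brL c d) = 0" for x c d
      by (rule perf_vanish[where f="\<lambda>x. \<Psi> x (brL c d)"]) (simp_all add: S0 Padd Pscale)
    have S2: "\<Psi> x y = 0" for y
      by (rule perf_vanish[where f="\<lambda>y. \<Psi> x y"]) (simp_all add: S1 Padd2 Pscale2)
    show ?thesis using S2[of y] unfolding \<Psi>_def by simp
  qed
  have J2: "brL (brL u v) w + brL (brL w u) v + brL (brL v w) u = 0" for u v w
  proof -
    have "brL w (brL u v) + brL u (brL v w) + brL v (brL w u) = 0" by (rule lie_jacobi[OF L])
    moreover have "brL (brL u v) w + brL (brL w u) v + brL (brL v w) u =
        - (brL w (brL u v) + brL u (brL v w) + brL v (brL w u))"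
      using antiL[of "brL u v" w] antiL[of "brL w u" v] antiL[of "brL v w" u] by simp
    ultimately show ?thesis by simp
  qed
  have "\<exists>x y. ip x y \<noteq> 0"
  proof (rule ccontr)
    assume "\<not> ?thesis"
    then have "ip = (\<lambda>x y. 0)" by (intro ext) auto
    then show False using ip(4) by simp
  qed
  then obtain x0 w where ipne: "ip x0 w \<noteq> 0" by blast
  have "\<exists>u v. ip (brL u v) w \<noteq> 0"
  proof (rule ccontr)
    assume "\<not> ?thesis"
    then have h: "ip (brL u v) w = 0" for u v by blast
    have "ip x0 w = 0"
      by (rule perf_vanish[where f="\<lambda>x. ip x w"]) (simp_all add: h bm_add1[OF ipbil] bm_scale1[OF ipbil])
    then show False using ipne by simp
  qed
  then obtain u v where sne: "ip (brL u v) w \<noteq> 0" by blast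
  have "\<exists>a b. \<xi> a b \<noteq> 0"
  proof (rule ccontr)
    assume "\<not> ?thesis"
    then have "\<xi> = (\<lambda>x y. 0)" by (intro ext) auto
    then show False using xi(2) by simp
  qed
  then obtain a0 b0 where xine: "\<xi> a0 b0 \<noteq> 0" by blast
  define s where "s = ip (brL u v) w"
  have s2: "ip (brL w u) v = s" unfolding s_def using ipinv[of w u v] ipsym[of w "brL u v"] by simp
  have s3: "ip (brL v w) u = s" unfolding s_def using ipinv[of u v w] ipsym[of u "brL v w"] by simp
  define M where "M p q = \<Phi> (brL u v) p w q + \<Phi> (brL w u) p v q + \<Phi> (brL v w) p u q" for p q
  have Mcyc: "M (a*b) c + M (c*a) b + M (b*c) a = 0" for a b c
  proof -
    have T1: "\<Phi> (brL u v) (a*b) w c + \<Phi> (brL w u) (c*a) v b + \<Phi> (brL v w) (b*c) u a = 0"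
      by (rule T)
    have T2: "\<Phi> (brL w u) (a*b) v c + \<Phi> (brL v w) (c*a) u b + \<Phi> (brL u v) (b*c) w a = 0"
      by (rule T)
    have T3: "\<Phi> (brL v w) (a*b) u c + \<Phi> (brL u v) (c*a) w b + \<Phi> (brL w u) (b*c) v a = 0"
      by (rule T)
    show ?thesis unfolding M_def using T1 T2 T3 by algebra
  qed
  have Msym: "M p q = M q p" for p q unfolding M_def using swap by metis
  have Mr1: "M r 1 = 0" for r
  proof -
    have "M (r*1) 1 + M (1*r) 1 + M (1*1) r = 0" by (rule Mcyc)
    then have "3 * M r 1 = 0" using Msym[of 1 r] by simp
    then show ?thesis using char3 by simp
  qed
  have M0: "M p q = 0" for p q
  proof -
    have "M (p*q) 1 + M (1*p) q + M (q*1) p = 0" by (rule Mcyc)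
    then have "2 * M p q = 0" using Msym[of q p] Mr1[of "p*q"] by simp
    then show ?thesis using char2 by simp
  qed
  have lam0: "\<phi> z (\<iota>G d) = 0" if dD: "d \<in> D" for d
  proof -
    define lam where "lam = \<phi> z (\<iota>G d)"
    have E: "\<phi> (tG (brL x y) (a*b)) (\<iota>G d) + ip x y * \<xi> a b * lam + \<Phi> x (d a) y b - \<Phi> x a y (d b) = 0"
      for x y a b
    proof -
      have b2: "brG (\<iota>G d) (tG x a) = tG x (d a)" using G_br2 dD by blast
      have b3: "brG (tG y b) (\<iota>G d) = - tG y (d b)" using antiG[of "\<iota>G d" "tG y b"] G_br2 dD by simp
      have "\<phi> (brG (tG x a) (tG y b)) (\<iota>G d) + \<phi> (brG (\<iota>G d) (tG x a)) (tG y b)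
          + \<phi> (brG (tG y b) (\<iota>G d)) (tG x a) = 0" by (rule pc)
      then show ?thesis
        unfolding b2 b3 G_br1[rule_format] lam_def \<Phi>_def
        by (simp add: bm_add1[OF pb] bm_scale1[OF pb] bm_neg1[OF pb] ps[of "tG y (d b)" "tG x a"])
    qed
    have phisum: "\<phi> (tG (brL (brL u v) w) (a0*b0)) (\<iota>G d) + \<phi> (tG (brL (brL w u) v) (a0*b0)) (\<iota>G d)
        + \<phi> (tG (brL (brL v w) u) (a0*b0)) (\<iota>G d) = 0"
    proof -
      have "\<phi> (tG (brL (brL u v) w + brL (brL w u) v + brL (brL v w) u) (a0*b0)) (\<iota>G d) = 0"
        unfolding J2 by (simp add: bm_zero1[OF tGbil] bm_zero1[OF pb])
      then show ?thesis by (simp add: bm_add1[OF tGbil] bm_add1[OF pb])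
    qed
    have e1: "\<phi> (tG (brL (brL u v) w) (a0*b0)) (\<iota>G d) + s * \<xi> a0 b0 * lam
        + \<Phi> (brL u v) (d a0) w b0 - \<Phi> (brL u v) a0 w (d b0) = 0"
      using E[of "brL u v" w a0 b0] unfolding s_def .
    have e2: "\<phi> (tG (brL (brL w u) v) (a0*b0)) (\<iota>G d) + s * \<xi> a0 b0 * lam
        + \<Phi> (brL w u) (d a0) v b0 - \<Phi> (brL w u) a0 v (d b0) = 0"
      using E[of "brL w u" v a0 b0] unfolding s2 .
    have e3: "\<phi> (tG (brL (brL v w) u) (a0*b0)) (\<iota>G d) + s * \<xi> a0 b0 * lam
        + \<Phi> (brL v w) (d a0) u b0 - \<Phi> (brL v w) a0 u (d b0) = 0"
      using E[of "brL v w" u a0 b0] unfolding s3 .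
    have m1: "M (d a0) b0 = 0" and m2: "M a0 (d b0) = 0" by (rule M0)+
    have "3 * (s * \<xi> a0 b0 * lam) = 0"
      using e1 e2 e3 phisum m1 m2 unfolding M_def by algebra
    then have "lam = 0" using char3 sne xine unfolding s_def by simp
    then show ?thesis unfolding lam_def .
  qed
  have zz: "\<phi> z z = 0"
  proof -
    have "\<phi> (brG (tG x0 a0) (tG w b0)) z = 0" by (rule step1)
    then have "\<phi> (tG (brL x0 w) (a0*b0)) z + (ip x0 w * \<xi> a0 b0) * \<phi> z z = 0"
      unfolding G_br1[rule_format] by (simp add: bm_add1[OF pb] bm_scale1[OF pb])
    moreover have "\<phi> (tG (brL x0 w) (a0*b0)) z = 0" using zt ps by metis
    ultimately have "(ip x0 w * \<xi> a0 b0) * \<phi> z z = 0" by simp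
    then show ?thesis using ipne xine by simp
  qed
  have zspan: "\<phi> z t = 0" if t: "t \<in> module.span sG (range (case_prod tG))" for t
    by (rule span_vanish[OF vsG t, where f="\<lambda>t. \<phi> z t"])
      (auto simp: zt bm_add2[OF pb] bm_scale2[OF pb])
  obtain t c d where tcd: "t \<in> module.span sG (range (case_prod tG))" "d \<in> D" "g = t + sG c z + \<iota>G d"
    using G_sum_ex by blast
  show ?thesis unfolding tcd(3)
    by (simp add: bm_add2[OF pb] bm_scale2[OF pb] zspan[OF tcd(1)] zz lam0[OF tcd(2)])
qed

end



lemma span_ind:
  fixes s :: "'k::field \<Rightarrow> 'v::ab_group_add \<Rightarrow> 'v"
  assumes vs: "vector_space s" and x: "x \<in> module.span s S"
    and P0: "P 0"
    and Padd: "\<And>a b. a \<in> module.span s S \<Longrightarrow> b \<in> module.span s S \<Longrightarrow> P a \<Longrightarrow> P b \<Longrightarrow> P (a + b)"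
    and Psc: "\<And>c a. a \<in> module.span s S \<Longrightarrow> P a \<Longrightarrow> P (s c a)"
    and Pb: "\<And>y. y \<in> S \<Longrightarrow> P y"
  shows "P x"
proof -
  interpret vector_space s by (rule vs)
  have "subspace (Collect (\<lambda>x. x \<in> span S \<and> P x))"
    unfolding subspace_def using P0 Padd Psc span_zero span_add span_scale by auto
  then have "x \<in> span S \<and> P x"
    by (rule span_induct[OF x, where P="\<lambda>x. x \<in> span S \<and> P x"]) (auto simp: Pb span_base)
  then show ?thesis by blast
qed

context setup54
begin

sublocale GH: tpair sL sA sG tG sH tH by (rule tpair.intro[OF vsG vsH G_tensor H_tensor])
sublocale HG: tpair sL sA sH tH sG tG by (rule tpair.intro[OF vsH vsG H_tensor G_tensor])

abbreviation "SG \<equiv> module.span sG (range (case_prod tG))"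
abbreviation "SH \<equiv> module.span sH (range (case_prod tH))"
abbreviation "TG \<equiv> transfer sL sA sG tG sH tH"
abbreviation "TH \<equiv> transfer sL sA sH tH sG tG"

definition piG where
  "piG g = (THE h. \<exists>t c d. t \<in> SG \<and> d \<in> D \<and> g = t + sG c z + \<iota>G d \<and> h = TG t + \<iota>H d)"
definition sigH where
  "sigH h = (THE g. \<exists>t d. t \<in> SH \<and> d \<in> D \<and> h = t + \<iota>H d \<and> g = TH t + \<iota>G d)"

lemma pi_eq:
  assumes t: "t \<in> SG" and d: "d \<in> D"
  shows "piG (t + sG c z + \<iota>G d) = TG t + \<iota>H d"
  unfolding piG_def
proof (rule the_equality)
  show "\<exists>t' c' d'. t' \<in> SG \<and> d' \<in> D \<and> t + sG c z + \<iota>G d = t' + sG c' z + \<iota>G d' \<and> TG t + \<iota>H d = TG t' + \<iota>H d'"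
    using t d by blast
  show "h = TG t + \<iota>H d" if hh: "\<exists>t' c' d'. t' \<in> SG \<and> d' \<in> D \<and> t + sG c z + \<iota>G d = t' + sG c' z + \<iota>G d' \<and> h = TG t' + \<iota>H d'" for h
  proof -
    obtain t' c' d' where h: "t' \<in> SG" "d' \<in> D" "t + sG c z + \<iota>G d = t' + sG c' z + \<iota>G d'" "h = TG t' + \<iota>H d'"
      using hh by blast
    have "t = t' \<and> d = d'" using G_sum_uniq t d h(1,2,3) by blast
    then show ?thesis using h(4) by simp
  qed
qed

lemma sig_eq:
  assumes t: "t \<in> SH" and d: "d \<in> D"
  shows "sigH (t + \<iota>H d) = TH t + \<iota>G d"
  unfolding sigH_def
proof (rule the_equality)
  show "\<exists>t' d'. t' \<in> SH \<and> d' \<in> D \<and> t + \<iota>H d = t' + \<iota>H d' \<and> TH t + \<iota>G d = TH t' + \<iota>G d'"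
    using t d by blast
  show "g = TH t + \<iota>G d" if hh: "\<exists>t' d'. t' \<in> SH \<and> d' \<in> D \<and> t + \<iota>H d = t' + \<iota>H d' \<and> g = TH t' + \<iota>G d'" for g
  proof -
    obtain t' d' where h: "t' \<in> SH" "d' \<in> D" "t + \<iota>H d = t' + \<iota>H d'" "g = TH t' + \<iota>G d'"
      using hh by blast
    have "t = t' \<and> d = d'" using H_sum_uniq t d h(1,2,3) by blast
    then show ?thesis using h(4) by simp
  qed
qed

lemma TG0: "TG 0 = 0"
proof -
  interpret Gv: vector_space sG by (rule vsG)
  have "TG (0 + 0) = TG 0 + TG 0" by (rule GH.transfer_add) (simp_all add: Gv.span_zero)
  then show ?thesis by simp
qed

lemma TH0: "TH 0 = 0"
proof -
  interpret Hv: vector_space sH by (rule vsH)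
  have "TH (0 + 0) = TH 0 + TH 0" by (rule HG.transfer_add) (simp_all add: Hv.span_zero)
  then show ?thesis by simp
qed

lemma pi_add: "piG (g1 + g2) = piG g1 + piG g2"
proof -
  interpret Gv: vector_space sG by (rule vsG)
  obtain t1 c1 d1 where 1: "t1 \<in> SG" "d1 \<in> D" "g1 = t1 + sG c1 z + \<iota>G d1" using G_sum_ex by blast
  obtain t2 c2 d2 where 2: "t2 \<in> SG" "d2 \<in> D" "g2 = t2 + sG c2 z + \<iota>G d2" using G_sum_ex by blast
  have "g1 + g2 = (t1 + t2) + sG (c1 + c2) z + \<iota>G (\<lambda>a. d1 a + d2 a)"
    unfolding 1(3) 2(3) iGadd[OF 1(2) 2(2)] by (simp add: Gv.scale_left_distrib algebra_simps)
  then have "piG (g1 + g2) = TG (t1 + t2) + \<iota>H (\<lambda>a. d1 a + d2 a)"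
    using pi_eq[OF Gv.span_add[OF 1(1) 2(1)] Dadd[OF 1(2) 2(2)]] by simp
  also have "\<dots> = piG g1 + piG g2"
    unfolding 1(3) 2(3) pi_eq[OF 1(1) 1(2)] pi_eq[OF 2(1) 2(2)] GH.transfer_add[OF 1(1) 2(1)]
      iHadd[OF 1(2) 2(2)] by (simp add: algebra_simps)
  finally show ?thesis .
qed

lemma pi_scale: "piG (sG k g) = sH k (piG g)"
proof -
  interpret Gv: vector_space sG by (rule vsG)
  interpret Hv: vector_space sH by (rule vsH)
  obtain t c d where 1: "t \<in> SG" "d \<in> D" "g = t + sG c z + \<iota>G d" using G_sum_ex by blast
  have "sG k g = sG k t + sG (k * c) z + \<iota>G (\<lambda>a. sA k (d a))"
    unfolding 1(3) iGscale[OF 1(2)] by (simp add: Gv.scale_right_distrib)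
  then have "piG (sG k g) = TG (sG k t) + \<iota>H (\<lambda>a. sA k (d a))"
    using pi_eq[OF Gv.span_scale[OF 1(1)] Dscale[OF 1(2)]] by simp
  also have "\<dots> = sH k (piG g)"
    unfolding 1(3) pi_eq[OF 1(1) 1(2)] GH.transfer_scale[OF 1(1)] iHscale[OF 1(2)]
    by (simp add: Hv.scale_right_distrib)
  finally show ?thesis .
qed

lemma sig_add: "sigH (h1 + h2) = sigH h1 + sigH h2"
proof -
  interpret Hv: vector_space sH by (rule vsH)
  obtain t1 d1 where 1: "t1 \<in> SH" "d1 \<in> D" "h1 = t1 + \<iota>H d1" using H_sum_ex by blast
  obtain t2 d2 where 2: "t2 \<in> SH" "d2 \<in> D" "h2 = t2 + \<iota>H d2" using H_sum_ex by blast
  have "h1 + h2 = (t1 + t2) + \<iota>H (\<lambda>a. d1 a + d2 a)"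
    unfolding 1(3) 2(3) iHadd[OF 1(2) 2(2)] by (simp add: algebra_simps)
  then have "sigH (h1 + h2) = TH (t1 + t2) + \<iota>G (\<lambda>a. d1 a + d2 a)"
    using sig_eq[OF Hv.span_add[OF 1(1) 2(1)] Dadd[OF 1(2) 2(2)]] by simp
  also have "\<dots> = sigH h1 + sigH h2"
    unfolding 1(3) 2(3) sig_eq[OF 1(1) 1(2)] sig_eq[OF 2(1) 2(2)] HG.transfer_add[OF 1(1) 2(1)]
      iGadd[OF 1(2) 2(2)] by (simp add: algebra_simps)
  finally show ?thesis .
qed

lemma sig_scale: "sigH (sH k h) = sG k (sigH h)"
proof -
  interpret Gv: vector_space sG by (rule vsG)
  interpret Hv: vector_space sH by (rule vsH)
  obtain t d where 1: "t \<in> SH" "d \<in> D" "h = t + \<iota>H d" using H_sum_ex by blast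
  have "sH k h = sH k t + \<iota>H (\<lambda>a. sA k (d a))"
    unfolding 1(3) iHscale[OF 1(2)] by (simp add: Hv.scale_right_distrib)
  then have "sigH (sH k h) = TH (sH k t) + \<iota>G (\<lambda>a. sA k (d a))"
    using sig_eq[OF Hv.span_scale[OF 1(1)] Dscale[OF 1(2)]] by simp
  also have "\<dots> = sG k (sigH h)"
    unfolding 1(3) sig_eq[OF 1(1) 1(2)] HG.transfer_scale[OF 1(1)] iGscale[OF 1(2)]
    by (simp add: Gv.scale_right_distrib)
  finally show ?thesis .
qed

lemma pi_t: "t \<in> SG \<Longrightarrow> piG t = TG t"
proof -
  assume t: "t \<in> SG"
  interpret Gv: vector_space sG by (rule vsG)
  have "piG (t + sG 0 z + \<iota>G (\<lambda>_. 0)) = TG t + \<iota>H (\<lambda>_. 0)" by (rule pi_eq[OF t D0])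
  then show ?thesis by (simp add: iG0 iH0)
qed

lemma pi_i: "d \<in> D \<Longrightarrow> piG (\<iota>G d) = \<iota>H d"
proof -
  assume d: "d \<in> D"
  interpret Gv: vector_space sG by (rule vsG)
  have "piG (0 + sG 0 z + \<iota>G d) = TG 0 + \<iota>H d" by (rule pi_eq[OF Gv.span_zero d])
  then show ?thesis by (simp add: TG0)
qed

lemma pi_z: "piG z = 0"
proof -
  interpret Gv: vector_space sG by (rule vsG)
  have "piG (0 + sG 1 z + \<iota>G (\<lambda>_. 0)) = TG 0 + \<iota>H (\<lambda>_. 0)" by (rule pi_eq[OF Gv.span_zero D0])
  then show ?thesis by (simp add: TG0 iG0 iH0)
qed

lemma pi_zero: "piG 0 = 0"
proof -
  have "piG (0 + 0) = piG 0 + piG 0" by (rule pi_add)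
  then show ?thesis by simp
qed

lemma pi_neg: "piG (- g) = - piG g"
proof -
  have "piG (- g + g) = piG (- g) + piG g" by (rule pi_add)
  then show ?thesis by (simp add: pi_zero eq_neg_iff_add_eq_0)
qed

lemma pi_sig: "piG (sigH h) = h"
proof -
  interpret Gv: vector_space sG by (rule vsG)
  obtain t d where 1: "t \<in> SH" "d \<in> D" "h = t + \<iota>H d" using H_sum_ex by blast
  have e: "piG (TH t + sG 0 z + \<iota>G d) = TG (TH t) + \<iota>H d" by (rule pi_eq[OF HG.transfer_in[OF 1(1)] 1(2)])
  have "sigH h = TH t + \<iota>G d" unfolding 1(3) sig_eq[OF 1(1) 1(2)] by simp
  then have "piG (sigH h) = TG (TH t) + \<iota>H d" using e by simp
  then show ?thesis using HG.transfer_inv[OF 1(1)] 1(3) by simp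
qed

lemma sig_pi: "\<exists>c. g = sigH (piG g) + sG c z"
proof -
  obtain t c d where 1: "t \<in> SG" "d \<in> D" "g = t + sG c z + \<iota>G d" using G_sum_ex by blast
  have "sigH (piG g) = TH (TG t) + \<iota>G d"
    unfolding 1(3) pi_eq[OF 1(1) 1(2)] by (rule sig_eq[OF GH.transfer_in[OF 1(1)] 1(2)])
  then have "g = sigH (piG g) + sG c z" using GH.transfer_inv[OF 1(1)] 1(3) by (simp add: algebra_simps)
  then show ?thesis by blast
qed

end



context setup54
begin

lemma brGz2: "brG g z = 0" using antiG[of g z] G_br4 by simp

lemma pi_diff: "piG (a - b) = piG a - piG b"
  using pi_add[of a "- b"] by (simp add: pi_neg)

lemma pi_b1:
  assumes t1: "t1 \<in> SG" and t2: "t2 \<in> SG"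
  shows "piG (brG t1 t2) = brH (TG t1) (TG t2)"
proof -
  interpret Gv: vector_space sG by (rule vsG)
  interpret Hv: vector_space sH by (rule vsH)
  have inner: "piG (brG (tG x a) t) = brH (tH x a) (TG t)" if t: "t \<in> SG" for x a t
  proof (rule span_ind[OF vsG t])
    show "piG (brG (tG x a) 0) = brH (tH x a) (TG 0)"
      by (simp add: bm_zero2[OF bilG] bm_zero2[OF bilH] pi_zero TG0)
    show "piG (brG (tG x a) (p + q)) = brH (tH x a) (TG (p + q))"
      if "p \<in> SG" "q \<in> SG" "piG (brG (tG x a) p) = brH (tH x a) (TG p)"
        "piG (brG (tG x a) q) = brH (tH x a) (TG q)" for p q
      using that by (simp add: bm_add2[OF bilG] bm_add2[OF bilH] pi_add GH.transfer_add)
    show "piG (brG (tG x a) (sG c p)) = brH (tH x a) (TG (sG c p))"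
      if "p \<in> SG" "piG (brG (tG x a) p) = brH (tH x a) (TG p)" for c p
      using that by (simp add: bm_scale2[OF bilG] bm_scale2[OF bilH] pi_scale GH.transfer_scale)
    show "piG (brG (tG x a) y) = brH (tH x a) (TG y)" if yr: "y \<in> range (case_prod tG)" for y
    proof -
      obtain y' b where y: "y = tG y' b" using yr by auto
      have "tG (brL x y') (a * b) \<in> SG" by (rule Gv.span_base) auto
      then show ?thesis unfolding y G_br1[rule_format] H_br1[rule_format]
        by (simp add: pi_add pi_scale pi_t pi_z GH.transfer_base H_br1)
    qed
  qed
  have outer: "\<forall>t2\<in>SG. piG (brG t1 t2) = brH (TG t1) (TG t2)"
  proof (rule span_ind[OF vsG t1, where P="\<lambda>t1. \<forall>t2\<in>SG. piG (brG t1 t2) = brH (TG t1) (TG t2)"])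
    show "\<forall>t2\<in>SG. piG (brG 0 t2) = brH (TG 0) (TG t2)"
      by (simp add: bm_zero1[OF bilG] bm_zero1[OF bilH] pi_zero TG0)
    show "\<forall>t2\<in>SG. piG (brG (p + q) t2) = brH (TG (p + q)) (TG t2)"
      if "p \<in> SG" "q \<in> SG" "\<forall>t2\<in>SG. piG (brG p t2) = brH (TG p) (TG t2)"
        "\<forall>t2\<in>SG. piG (brG q t2) = brH (TG q) (TG t2)" for p q
      using that by (simp add: bm_add1[OF bilG] bm_add1[OF bilH] pi_add GH.transfer_add)
    show "\<forall>t2\<in>SG. piG (brG (sG c p) t2) = brH (TG (sG c p)) (TG t2)"
      if "p \<in> SG" "\<forall>t2\<in>SG. piG (brG p t2) = brH (TG p) (TG t2)" for c p
      using that by (simp add: bm_scale1[OF bilG] bm_scale1[OF bilH] pi_scale GH.transfer_scale)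
    show "\<forall>t2\<in>SG. piG (brG y t2) = brH (TG y) (TG t2)" if "y \<in> range (case_prod tG)" for y
      using that inner by (auto simp: GH.transfer_base)
  qed
  then show ?thesis using t2 by blast
qed

lemma pi_b2:
  assumes d: "d \<in> D" and t: "t \<in> SG"
  shows "piG (brG (\<iota>G d) t) = brH (\<iota>H d) (TG t)"
proof (rule span_ind[OF vsG t])
  interpret Gv: vector_space sG by (rule vsG)
  show "piG (brG (\<iota>G d) 0) = brH (\<iota>H d) (TG 0)"
    by (simp add: bm_zero2[OF bilG] bm_zero2[OF bilH] pi_zero TG0)
  show "piG (brG (\<iota>G d) (p + q)) = brH (\<iota>H d) (TG (p + q))"
    if "p \<in> SG" "q \<in> SG" "piG (brG (\<iota>G d) p) = brH (\<iota>H d) (TG p)"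
      "piG (brG (\<iota>G d) q) = brH (\<iota>H d) (TG q)" for p q
    using that by (simp add: bm_add2[OF bilG] bm_add2[OF bilH] pi_add GH.transfer_add)
  show "piG (brG (\<iota>G d) (sG c p)) = brH (\<iota>H d) (TG (sG c p))"
    if "p \<in> SG" "piG (brG (\<iota>G d) p) = brH (\<iota>H d) (TG p)" for c p
    using that by (simp add: bm_scale2[OF bilG] bm_scale2[OF bilH] pi_scale GH.transfer_scale)
  show "piG (brG (\<iota>G d) y) = brH (\<iota>H d) (TG y)" if yr: "y \<in> range (case_prod tG)" for y
  proof -
    obtain x a where y: "y = tG x a" using yr by auto
    have "tG x (d a) \<in> SG" by (rule Gv.span_base) auto
    then show ?thesis unfolding y using G_br2 H_br2 d by (simp add: pi_t GH.transfer_base)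
  qed
qed

lemma pi_b3:
  assumes d: "d \<in> D" and e: "e \<in> D"
  shows "piG (brG (\<iota>G d) (\<iota>G e)) = brH (\<iota>H d) (\<iota>H e)"
  using G_br3 H_br3 d e by (simp add: pi_i Dbr)

lemma pi_br: "piG (brG g1 g2) = brH (piG g1) (piG g2)"
proof -
  interpret Gv: vector_space sG by (rule vsG)
  interpret Hv: vector_space sH by (rule vsH)
  obtain t1 c1 d1 where 1: "t1 \<in> SG" "d1 \<in> D" "g1 = t1 + sG c1 z + \<iota>G d1" using G_sum_ex by blast
  obtain t2 c2 d2 where 2: "t2 \<in> SG" "d2 \<in> D" "g2 = t2 + sG c2 z + \<iota>G d2" using G_sum_ex by blast
  have "brG g1 g2 = brG t1 t2 + brG t1 (\<iota>G d2) + brG (\<iota>G d1) t2 + brG (\<iota>G d1) (\<iota>G d2)"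
    unfolding 1(3) 2(3)
    by (simp add: bm_add1[OF bilG] bm_add2[OF bilG] bm_scale1[OF bilG] bm_scale2[OF bilG] G_br4 brGz2
        algebra_simps)
  then have "piG (brG g1 g2) = brH (TG t1) (TG t2) + brH (TG t1) (\<iota>H d2) + brH (\<iota>H d1) (TG t2)
      + brH (\<iota>H d1) (\<iota>H d2)"
    using antiG[of t1 "\<iota>G d2"] antiH[of "\<iota>H d2" "TG t1"]
    by (simp add: pi_add pi_neg pi_diff pi_b1[OF 1(1) 2(1)] pi_b2[OF 2(2) 1(1)] pi_b2[OF 1(2) 2(1)] pi_b3[OF 1(2) 2(2)])
  also have "\<dots> = brH (piG g1) (piG g2)"
    unfolding 1(3) 2(3) pi_eq[OF 1(1) 1(2)] pi_eq[OF 2(1) 2(2)]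
    by (simp add: bm_add1[OF bilH] bm_add2[OF bilH] algebra_simps)
  finally show ?thesis .
qed

end



context setup54
begin

definition FF :: "('g \<Rightarrow> 'g \<Rightarrow> 'k) \<Rightarrow> ('h \<Rightarrow> 'h \<Rightarrow> 'k)" where "FF \<phi> = (\<lambda>h1 h2. \<phi> (sigH h1) (sigH h2))"
definition GG :: "('h \<Rightarrow> 'h \<Rightarrow> 'k) \<Rightarrow> ('g \<Rightarrow> 'g \<Rightarrow> 'k)" where "GG \<psi> = (\<lambda>g1 g2. \<psi> (piG g1) (piG g2))"

lemma F_mem:
  assumes phi: "\<phi> \<in> Z2comm sG brG"
  shows "FF \<phi> \<in> Z2comm sH brH"
proof -
  have pb: "bilin_map sG sG (*) \<phi>" using phi unfolding Z2comm_def bilin_form_def by blast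
  have ps: "\<And>x y. \<phi> x y = \<phi> y x" using phi unfolding Z2comm_def by blast
  have pc: "\<And>x y w. \<phi> (brG x y) w + \<phi> (brG w x) y + \<phi> (brG y w) x = 0"
    using phi unfolding Z2comm_def by blast
  have mH: "module sH" using vsH by (simp add: module_iff_vector_space)
  have key: "\<phi> (sigH (brH h1 h2)) e = \<phi> (brG (sigH h1) (sigH h2)) e" for h1 h2 e
  proof -
    define X where "X = brG (sigH h1) (sigH h2)"
    have pX: "piG X = brH h1 h2" unfolding X_def pi_br pi_sig ..
    obtain c where c: "X = sigH (piG X) + sG c z" using sig_pi by blast
    have "\<phi> X e = \<phi> (sigH (brH h1 h2)) e + c * \<phi> z e"
      using c pX by (metis bm_add1[OF pb] bm_scale1[OF pb])
    then show ?thesis using zkill[OF phi] unfolding X_def by simp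
  qed
  have bil: "bilin_form sH (FF \<phi>)"
    unfolding bilin_form_def bilin_map_def module_hom_def module_hom_axioms_def
    by (auto simp: FF_def mH module_field sig_add sig_scale bm_add1[OF pb] bm_add2[OF pb]
      bm_scale1[OF pb] bm_scale2[OF pb])
  have sym: "\<forall>x y. FF \<phi> x y = FF \<phi> y x" unfolding FF_def using ps by blast
  have cyc: "\<forall>x y w. FF \<phi> (brH x y) w + FF \<phi> (brH w x) y + FF \<phi> (brH y w) x = 0"
    unfolding FF_def key using pc by blast
  show ?thesis unfolding Z2comm_def using bil sym cyc by blast
qed

lemma G_mem:
  assumes psi: "\<psi> \<in> Z2comm sH brH"
  shows "GG \<psi> \<in> Z2comm sG brG"
proof -
  have pb: "bilin_map sH sH (*) \<psi>" using psi unfolding Z2comm_def bilin_form_def by blast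
  have ps: "\<And>x y. \<psi> x y = \<psi> y x" using psi unfolding Z2comm_def by blast
  have pc: "\<And>x y w. \<psi> (brH x y) w + \<psi> (brH w x) y + \<psi> (brH y w) x = 0"
    using psi unfolding Z2comm_def by blast
  have mG: "module sG" using vsG by (simp add: module_iff_vector_space)
  have bil: "bilin_form sG (GG \<psi>)"
    unfolding bilin_form_def bilin_map_def module_hom_def module_hom_axioms_def
    by (auto simp: GG_def mG module_field pi_add pi_scale bm_add1[OF pb] bm_add2[OF pb]
      bm_scale1[OF pb] bm_scale2[OF pb])
  have sym: "\<forall>x y. GG \<psi> x y = GG \<psi> y x" unfolding GG_def using ps by blast
  have cyc: "\<forall>x y w. GG \<psi> (brG x y) w + GG \<psi> (brG w x) y + GG \<psi> (brG y w) x = 0"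
    unfolding GG_def pi_br using pc by blast
  show ?thesis unfolding Z2comm_def using bil sym cyc by blast
qed

lemma FG: "FF (GG \<psi>) = \<psi>"
  unfolding FF_def GG_def pi_sig ..

lemma GF:
  assumes phi: "\<phi> \<in> Z2comm sG brG"
  shows "GG (FF \<phi>) = \<phi>"
proof (intro ext)
  fix g1 g2
  have pb: "bilin_map sG sG (*) \<phi>" using phi unfolding Z2comm_def bilin_form_def by blast
  have ps: "\<And>x y. \<phi> x y = \<phi> y x" using phi unfolding Z2comm_def by blast
  obtain c1 where c1: "g1 = sigH (piG g1) + sG c1 z" using sig_pi by blast
  obtain c2 where c2: "g2 = sigH (piG g2) + sG c2 z" using sig_pi by blast
  have zk: "\<phi> z g = 0" "\<phi> g z = 0" for g using zkill[OF phi] ps by metis+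
  have "\<phi> g1 g2 = \<phi> (sigH (piG g1)) (sigH (piG g2))"
    by (subst c1, subst c2) (simp add: bm_add1[OF pb] bm_add2[OF pb] bm_scale1[OF pb] bm_scale2[OF pb] zk)
  then show "GG (FF \<phi>) g1 g2 = \<phi> g1 g2" unfolding GG_def FF_def by simp
qed

lemma main_iso: "forms_iso (Z2comm sG brG) (Z2comm sH brH)"
  unfolding forms_iso_def
proof (intro exI conjI)
  show "bij_betw FF (Z2comm sG brG) (Z2comm sH brH)"
    by (rule bij_betw_byWitness[where f'=GG]) (auto simp: GF FG F_mem G_mem)
  show "\<forall>\<phi>\<in>Z2comm sG brG. \<forall>\<psi>\<in>Z2comm sG brG. FF (\<lambda>u v. \<phi> u v + \<psi> u v) = (\<lambda>u v. FF \<phi> u v + FF \<psi> u v)"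
    by (simp add: FF_def)
  show "\<forall>c. \<forall>\<phi>\<in>Z2comm sG brG. FF (\<lambda>u v. c * \<phi> u v) = (\<lambda>u v. c * FF \<phi> u v)"
    by (simp add: FF_def)
qed

end


theorem lemma5p4:
  fixes sL :: "'k::field \<Rightarrow> 'l::ab_group_add \<Rightarrow> 'l" and brL :: "'l \<Rightarrow> 'l \<Rightarrow> 'l"
    and sA :: "'k \<Rightarrow> 'a::comm_ring_1 \<Rightarrow> 'a"
    and D :: "('a \<Rightarrow> 'a) set"
    and ip :: "'l \<Rightarrow> 'l \<Rightarrow> 'k" and \<xi> :: "'a \<Rightarrow> 'a \<Rightarrow> 'k"
    and sG :: "'k \<Rightarrow> 'g::ab_group_add \<Rightarrow> 'g" and brG :: "'g \<Rightarrow> 'g \<Rightarrow> 'g"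
    and tG :: "'l \<Rightarrow> 'a \<Rightarrow> 'g" and z :: 'g and \<iota>G :: "('a \<Rightarrow> 'a) \<Rightarrow> 'g"
    and sH :: "'k \<Rightarrow> 'h::ab_group_add \<Rightarrow> 'h" and brH :: "'h \<Rightarrow> 'h \<Rightarrow> 'h"
    and tH :: "'l \<Rightarrow> 'a \<Rightarrow> 'h" and \<iota>H :: "('a \<Rightarrow> 'a) \<Rightarrow> 'h"
  assumes char2: "(2::'k) \<noteq> 0" and char3: "(3::'k) \<noteq> 0"
    and L: "lie_algebra sL brL" and perf: "perfect_lie sL brL"
    and A: "comm_algebra sA"
    and fin: "fin_dim sL \<or> fin_dim sA"
    and D: "der_subalgebra sA D"
    and ip: "bilin_form sL ip" "\<forall>x y. ip x y = ip y x" "invariant_form brL ip" "ip \<noteq> (\<lambda>x y. 0)"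
    and xi: "\<xi> \<in> HC1 sA" "\<xi> \<noteq> (\<lambda>a b. 0)"
    \<comment> \<open>G = (L \<otimes> A) \<oplus> K z \<oplus> D with the given brackets, assumed to be a Lie algebra\<close>
    and G: "lie_algebra sG brG"
    and G_tensor: "tensor_embedding sL sA sG tG"
    and G_D: "lin_on_D sA sG D \<iota>G"
    and G_sum_ex: "\<forall>g. \<exists>t c d. t \<in> module.span sG (range (case_prod tG)) \<and> d \<in> D \<and>
                        g = t + sG c z + \<iota>G d"
    and G_sum_uniq: "\<forall>t c d t' c' d'. t \<in> module.span sG (range (case_prod tG)) \<and> d \<in> D \<and>
                        t' \<in> module.span sG (range (case_prod tG)) \<and> d' \<in> D \<and>
                        t + sG c z + \<iota>G d = t' + sG c' z + \<iota>G d' \<longrightarrow> t = t' \<and> c = c' \<and> d = d'"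
    and G_br1: "\<forall>x y a b. brG (tG x a) (tG y b) = tG (brL x y) (a * b) + sG (ip x y * \<xi> a b) z"
    and G_br2: "\<forall>d\<in>D. \<forall>x a. brG (\<iota>G d) (tG x a) = tG x (d a)"
    and G_br3: "\<forall>d\<in>D. \<forall>e\<in>D. brG (\<iota>G d) (\<iota>G e) = \<iota>G (\<lambda>a. d (e a) - e (d a))"
    and G_br4: "\<forall>g. brG z g = 0"
    \<comment> \<open>H = (L \<otimes> A) \<oplus> D with the given brackets\<close>
    and H: "lie_algebra sH brH"
    and H_tensor: "tensor_embedding sL sA sH tH"
    and H_D: "lin_on_D sA sH D \<iota>H"
    and H_sum_ex: "\<forall>h. \<exists>t d. t \<in> module.span sH (range (case_prod tH)) \<and> d \<in> D \<and> h = t + \<iota>H d"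
    and H_sum_uniq: "\<forall>t d t' d'. t \<in> module.span sH (range (case_prod tH)) \<and> d \<in> D \<and>
                        t' \<in> module.span sH (range (case_prod tH)) \<and> d' \<in> D \<and>
                        t + \<iota>H d = t' + \<iota>H d' \<longrightarrow> t = t' \<and> d = d'"
    and H_br1: "\<forall>x y a b. brH (tH x a) (tH y b) = tH (brL x y) (a * b)"
    and H_br2: "\<forall>d\<in>D. \<forall>x a. brH (\<iota>H d) (tH x a) = tH x (d a)"
    and H_br3: "\<forall>d\<in>D. \<forall>e\<in>D. brH (\<iota>H d) (\<iota>H e) = \<iota>H (\<lambda>a. d (e a) - e (d a))"
  shows "forms_iso (Z2comm sG brG) (Z2comm sH brH)"
proof -
  interpret setup54 sL brL sA D ip \<xi> sG brG tG z \<iota>G sH brH tH \<iota>H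
    unfolding setup54_def by (intro conjI; fact)
  show ?thesis by (rule main_iso)
qed

end
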